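(* Let $\gamma_1,\dots,\gamma_n$ be programs with common recorder $h$ and let $h_0$ be a fresh trace variable. For each $j$ let $v_j$ be a state and $Y_j\supseteq CN(\gamma_j)$ a channel set with $v_j\models h_0\downarrow Y_j=h\downarrow Y_j$; let $(v_j,\tau_j,w_j)\in[\![\gamma_j]\!]$ and let $\tau_{ej}$ be a recorded trace with $\tau_j=\tau_{ej}\downarrow Y_j$. Let $\tilde v$ be a state such that at least one of the following holds: (1) for all $j$, $\tilde v=v_j\cdot\tau_{ej}$; or (2) for all $j$, $\tilde v=w_{ej}\cdot\tau_{ej}$ for some state $w_{ej}$ with $w_{ej}=w_j$ on $\{h_0,h\}$ (in particular $w_j\ne\bot$). Then for every channel set $Y\supseteq\bigcup_jCN(\gamma_j)$: if $\tilde v\models h\downarrow Y\succeq h_0$, there is a suffix $\tau_h$ of $\tilde v(h)$ (i.e. $\tilde v(h)=\rho\cdot\tau_h$ for some trace $\rho$) such that $\tau_h\downarrow\gamma_j=\tau_j(h)$ for all $j$ and $\tilde v(h)\downarrow Y=\tilde v(h_0)\cdot(\tau_h\downarrow Y)$.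
   Context: Communicating hybrid programs (CHPs) over real variables, trace variables and channels $\mathbb N$; each program binds at most one trace variable, its recorder. Traces are finite sequences of events $\langle ch,a,d\rangle\in\mathbb N\times\mathbb R\times\mathbb R$; $\tau\downarrow Y$ deletes events with channel outside $Y$; $\tau\downarrow\gamma$ projects onto the channels of program $\gamma$; $\preceq$ is the prefix order ($\succeq$ its converse). A recorded trace is a pair $(h,\tau)$, viewed also as the map sending $h$ to $\tau$ and all other trace variables to $\epsilon$; projection acts pointwise, so $\tau_{ej}\downarrow Y_j$ and $\tau_j(h)$ make sense. States map real variables to reals and trace variables to traces; $v\cdot(h,\tau)$ is $v$ with $v(h)$ replaced by $v(h)\cdot\tau$. The semantics $[\![\gamma]\!]$ of a program is a set of runs $(v,\tau,w)$: initial state $v$, communication $\tau$ recorded by the program's recorder, final state $w$ or $\bot$ (unfinished). $CN(\gamma)$ is the set of channels $ch$ such that $\tau\downarrow\{ch\}\ne\epsilon$ for some run $(v,\tau,w)\in[\![\gamma]\!]$. Bound-effect property: for every run $(v,\tau,w)$ with $w\ne\bot$, $v=w$ on trace variables and on all variables not bound by $\gamma$ (in particular $w(h_0)=v(h_0)$ and $w(h)=v(h)$ for the recorder $h$). *)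

theory Defs
  imports Complex_Main "HOL-Library.Sublist"
begin

type_synonym chan = nat
type_synonym event = "chan \<times> real \<times> real"
type_synonym trace = "event list"

datatype rvar = RVar nat
datatype tvar = TVar nat

type_synonym state = "(rvar \<Rightarrow> real) \<times> (tvar \<Rightarrow> trace)"

definition rv :: "state \<Rightarrow> rvar \<Rightarrow> real" where "rv s = fst s"
definition tv :: "state \<Rightarrow> tvar \<Rightarrow> trace" where "tv s = snd s"

type_synonym rtrace = "tvar \<times> trace"

definition proj :: "trace \<Rightarrow> chan set \<Rightarrow> trace" where
  "proj t Y = filter (\<lambda>e. fst e \<in> Y) t"

definition rmap :: "rtrace \<Rightarrow> tvar \<Rightarrow> trace" where
  "rmap r x = (if x = fst r then snd r else [])"

definition rproj :: "rtrace \<Rightarrow> chan set \<Rightarrow> tvar \<Rightarrow> trace" where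
  "rproj r Y = (\<lambda>x. proj (rmap r x) Y)"

text \<open>v \<cdot> (h,tau): v with v(h) replaced by v(h) @ tau.\<close>
definition sapp :: "state \<Rightarrow> rtrace \<Rightarrow> state" where
  "sapp v r = (fst v, (snd v)(fst r := snd v (fst r) @ snd r))"

text \<open>A run (v, tau, w): initial state, communication recorded on the recorder, final state
  (None = unfinished, i.e. bottom).\<close>
type_synonym run = "state \<times> trace \<times> state option"

definition CN :: "run set \<Rightarrow> chan set" where
  "CN S = {ch. \<exists>v t w. (v, t, w) \<in> S \<and> proj t {ch} \<noteq> []}"

definition bound_effect :: "('p \<Rightarrow> run set) \<Rightarrow> ('p \<Rightarrow> rvar set) \<Rightarrow> bool" where
  "bound_effect sem BV \<longleftrightarrow>
     (\<forall>g v t w. (v, t, Some w) \<in> sem g \<longrightarrow>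
        tv w = tv v \<and> (\<forall>x. x \<notin> BV g \<longrightarrow> rv w x = rv v x))"

end

theory Submission
  imports Defs
begin


lemma split_filter:
  "filter P t = p @ r \<Longrightarrow> \<exists>\<rho> s. t = \<rho> @ s \<and> filter P s = r"
proof (induction t arbitrary: p)
  case Nil then show ?case by simp
next
  case (Cons x t)
  show ?case
  proof (cases "p = []")
    case True
    then show ?thesis using Cons.prems by (intro exI[of _ "[]"] exI[of _ "x # t"]) simp
  next
    case False
    then obtain q p' where p: "p = q # p'" by (cases p) auto
    show ?thesis
    proof (cases "P x")
      case True
      then have "filter P t = p' @ r" using Cons.prems p by simp
      from Cons.IH[OF this] obtain \<rho> s where "t = \<rho> @ s" "filter P s = r" by blast
      then show ?thesis by (intro exI[of _ "x # \<rho>"] exI[of _ s]) simp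
    next
      case False
      then have "filter P t = p @ r" using Cons.prems by simp
      from Cons.IH[OF this] obtain \<rho> s where "t = \<rho> @ s" "filter P s = r" by blast
      then show ?thesis by (intro exI[of _ "x # \<rho>"] exI[of _ s]) simp
    qed
  qed
qed

lemma tv_sapp: "tv (sapp u r) x = tv u x @ rmap r x"
  by (auto simp: tv_def sapp_def rmap_def)

lemma proj_append: "proj (a @ b) Y = proj a Y @ proj b Y"
  by (simp add: proj_def)

lemma proj_proj: "proj (proj t A) B = proj t (A \<inter> B)"
  by (auto simp: proj_def intro: filter_cong)

lemma proj_mono_eq: "B \<subseteq> A \<Longrightarrow> proj a A = proj b A \<Longrightarrow> proj a B = proj b B"
proof -
  assume "B \<subseteq> A" "proj a A = proj b A"
  then have "proj (proj a A) B = proj (proj b A) B" by simp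
  then show ?thesis using \<open>B \<subseteq> A\<close> by (simp add: proj_proj Int_absorb1)
qed

lemma proj_CN: "(v, t, w) \<in> S \<Longrightarrow> proj t (CN S) = t"
  unfolding proj_def
proof (rule filter_True, intro ballI)
  fix e assume "(v, t, w) \<in> S" "e \<in> set t"
  then have "proj t {fst e} \<noteq> []" by (auto simp: proj_def filter_empty_conv)
  then show "fst e \<in> CN S" using \<open>(v, t, w) \<in> S\<close> unfolding CN_def by blast
qed

theorem lemmaC1:
  fixes sem :: "'p \<Rightarrow> run set"      \<comment> \<open>semantics [[\<gamma>]]\<close>
    and recorder :: "'p \<Rightarrow> tvar"    \<comment> \<open>the recorder of a program\<close>
    and BV :: "'p \<Rightarrow> rvar set"       \<comment> \<open>bound real variables of a program\<close>
    and TVs :: "'p \<Rightarrow> tvar set"      \<comment> \<open>trace variables occurring in a program\<close>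
    and n :: nat
    and \<gamma> :: "nat \<Rightarrow> 'p"
    and h h0 :: tvar
    and v :: "nat \<Rightarrow> state" and Yj :: "nat \<Rightarrow> chan set"
    and \<tau> :: "nat \<Rightarrow> trace" and w :: "nat \<Rightarrow> state option"
    and \<tau>e :: "nat \<Rightarrow> rtrace"
    and vt :: state
  assumes be: "bound_effect sem BV"
    and rec_occ: "\<And>g. recorder g \<in> TVs g"
    and n_pos: "n \<ge> 1"
    and rec: "\<And>j. j < n \<Longrightarrow> recorder (\<gamma> j) = h"
    and fresh: "h0 \<noteq> h" "\<And>j. j < n \<Longrightarrow> h0 \<notin> TVs (\<gamma> j)"
    and Yj: "\<And>j. j < n \<Longrightarrow> CN (sem (\<gamma> j)) \<subseteq> Yj j"
    and vj: "\<And>j. j < n \<Longrightarrow> proj (tv (v j) h0) (Yj j) = proj (tv (v j) h) (Yj j)"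
    and run: "\<And>j. j < n \<Longrightarrow> (v j, \<tau> j, w j) \<in> sem (\<gamma> j)"
    and rtr: "\<And>j. j < n \<Longrightarrow> rmap (h, \<tau> j) = rproj (\<tau>e j) (Yj j)"
    and cases: "(\<forall>j<n. vt = sapp (v j) (\<tau>e j))
              \<or> (\<forall>j<n. \<exists>wej wj. w j = Some wj \<and> tv wej h0 = tv wj h0 \<and> tv wej h = tv wj h
                         \<and> vt = sapp wej (\<tau>e j))"
  shows "\<forall>Y. (\<Union>j<n. CN (sem (\<gamma> j))) \<subseteq> Y \<longrightarrow>
           prefix (tv vt h0) (proj (tv vt h) Y) \<longrightarrow>
           (\<exists>\<rho> \<tau>h. tv vt h = \<rho> @ \<tau>h
                 \<and> (\<forall>j<n. proj \<tau>h (CN (sem (\<gamma> j))) = rmap (h, \<tau> j) h)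
                 \<and> proj (tv vt h) Y = tv vt h0 @ proj \<tau>h Y)"
  proof (intro allI impI)
  fix Y assume Ysub: "(\<Union>j<n. CN (sem (\<gamma> j))) \<subseteq> Y"
    and pre: "prefix (tv vt h0) (proj (tv vt h) Y)"
  from pre obtain r where r: "proj (tv vt h) Y = tv vt h0 @ r"
    by (auto simp: prefix_def)
  from split_filter[OF r[unfolded proj_def]] obtain \<rho> \<tau>h
    where rt: "tv vt h = \<rho> @ \<tau>h" "proj \<tau>h Y = r" unfolding proj_def by blast
  have base: "\<exists>u. tv u h = tv (v j) h \<and> tv u h0 = tv (v j) h0 \<and> vt = sapp u (\<tau>e j)"
    if j: "j < n" for j
    using cases
  proof
    assume "\<forall>j<n. vt = sapp (v j) (\<tau>e j)"
    then show ?thesis using j by blast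
  next
    assume "\<forall>j<n. \<exists>wej wj. w j = Some wj \<and> tv wej h0 = tv wj h0 \<and> tv wej h = tv wj h
                         \<and> vt = sapp wej (\<tau>e j)"
    then obtain wej wj where A: "w j = Some wj" "tv wej h0 = tv wj h0" "tv wej h = tv wj h"
      "vt = sapp wej (\<tau>e j)" using j by blast
    have "tv wj = tv (v j)" using be run[OF j] A(1) unfolding bound_effect_def by fastforce
    then show ?thesis using A by metis
  qed
  have main: "proj \<tau>h (CN (sem (\<gamma> j))) = rmap (h, \<tau> j) h" if j: "j < n" for j
  proof -
    let ?C = "CN (sem (\<gamma> j))"
    from base[OF j] obtain u where u: "tv u h = tv (v j) h" "tv u h0 = tv (v j) h0"
      "vt = sapp u (\<tau>e j)" by blast
    have CY: "?C \<subseteq> Y" using Ysub j by blast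
    have CYj: "?C \<subseteq> Yj j" using Yj[OF j] .
    have t1: "\<tau> j = proj (rmap (\<tau>e j) h) (Yj j)"
      using fun_cong[OF rtr[OF j], of h] by (simp add: rmap_def rproj_def)
    have t0: "[] = proj (rmap (\<tau>e j) h0) (Yj j)"
      using fun_cong[OF rtr[OF j], of h0] fresh(1) by (simp add: rmap_def rproj_def)
    have tC: "proj (\<tau> j) ?C = \<tau> j" using proj_CN run[OF j] by blast
    have e0: "proj (rmap (\<tau>e j) h0) ?C = []"
      using proj_mono_eq[OF CYj, of "rmap (\<tau>e j) h0" "[]"] t0 by (simp add: proj_def)
    have eC: "proj (rmap (\<tau>e j) h) ?C = \<tau> j"
      using tC t1 by (simp add: proj_proj Int_absorb1[OF CYj] Int_commute)
    have vab: "proj (tv (v j) h0) ?C = proj (tv (v j) h) ?C"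
      using proj_mono_eq[OF CYj vj[OF j]] .
    have "proj (proj (tv vt h) Y) ?C = proj (tv vt h0 @ r) ?C" using r by simp
    then have "proj (tv vt h) ?C = proj (tv vt h0) ?C @ proj r ?C"
      using Int_absorb1[OF CY] by (simp add: proj_proj proj_append)
    then have "proj (tv (v j) h) ?C @ \<tau> j = proj (tv (v j) h) ?C @ proj r ?C"
      using u tv_sapp[of u "\<tau>e j"] e0 eC vab by (simp add: proj_append)
    then have "proj r ?C = \<tau> j" by simp
    moreover have "proj \<tau>h ?C = proj r ?C"
      using rt(2) Int_absorb1[OF CY] proj_proj[of \<tau>h Y ?C] by simp
    ultimately show ?thesis by (simp add: rmap_def)
  qed
  show "\<exists>\<rho> \<tau>h. tv vt h = \<rho> @ \<tau>h
                 \<and> (\<forall>j<n. proj \<tau>h (CN (sem (\<gamma> j))) = rmap (h, \<tau> j) h)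
                 \<and> proj (tv vt h) Y = tv vt h0 @ proj \<tau>h Y"
    using rt main r by blast
qed


end
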